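(* For every finite set of formulas $\Gamma\cup\{\varphi\}\subseteq For$: $\Gamma \vdash_{\bf Tm} \varphi$ if and only if there exist sets of formulas $\Upsilon,\Upsilon'$ such that $\Gamma\cup\{\circ \delta \ : \ \delta \in \Upsilon\}\cup\{\circ' \gamma \ : \ \gamma \in \Upsilon'\} \vdash_{\bf Km} \varphi$, where $\circ\delta:=\Box\delta\to\Diamond\delta$ and $\circ'\gamma:=(\Box\gamma\to\gamma)\wedge(\Box\neg\gamma\to\neg\gamma)$.
   Context: Formulas are built from a denumerable set of propositional variables by the unary connectives $\neg$, $\Box$ and the binary connective $\to$; $For$ is the set of all formulas. Abbreviations: $\Diamond\alpha:=\neg\Box\neg\alpha$, $\alpha\vee\beta:=\neg\alpha\to\beta$, $\alpha\wedge\beta:=\neg(\alpha\to\neg\beta)$. All Hilbert calculi below have as axioms all instances (over $For$) of the axiom schemas of a standard Hilbert calculus for classical propositional logic in the signature $\{\neg,\to\}$, plus the listed modal schemas, with modus ponens as the only rule; $\Gamma\vdash_{\bf L}\alpha$ means there is a derivation of $\alpha$ from $\Gamma$ in ${\bf L}$. ${\bf Km}$: (K') $\Diamond\alpha\to(\Box(\alpha\to\beta)\to(\Box\alpha\to\Box\beta))$; (K1') $\Diamond\neg\beta\to(\Box(\alpha\to\beta)\to(\Diamond\alpha\to\Diamond\beta))$; (K2') $\Diamond\alpha\to(\Diamond(\alpha\to\beta)\to(\Box\alpha\to\Diamond\beta))$; (M3') $(\Diamond\alpha\vee\Diamond\neg\alpha)\to(\Diamond\beta\to\Diamond(\alpha\to\beta))$;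 (M4') $\Diamond\neg\beta\to(\Diamond\neg\alpha\to\Diamond(\alpha\to\beta))$; (I1) $(\Box\alpha\wedge\Box\neg\alpha)\to(\Box(\alpha\to\beta)\wedge\Box\neg(\alpha\to\beta))$; (I2) $(\Box\beta\wedge\Box\neg\beta)\to(\Box(\alpha\to\beta)\wedge\Box\neg(\alpha\to\beta))$; (M1) $\neg\Diamond\alpha\to\Box(\alpha\to\beta)$; (M2) $\Box\beta\to\Box(\alpha\to\beta)$; (DN1) $\Box\alpha\to\Box\neg\neg\alpha$; (DN2) $\Box\neg\neg\alpha\to\Box\alpha$. ${\bf Tm}$: (K) $\Box(\alpha\to\beta)\to(\Box\alpha\to\Box\beta)$; (K1) $\Box(\alpha\to\beta)\to(\Diamond\alpha\to\Diamond\beta)$; (K2) $\Diamond(\alpha\to\beta)\to(\Box\alpha\to\Diamond\beta)$; (M1); (M2); (M3) $\Diamond\beta\to\Diamond(\alpha\to\beta)$; (M4) $\Diamond\neg\alpha\to\Diamond(\alpha\to\beta)$; (DN1); (DN2); (T) $\Box\alpha\to\alpha$. *)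

theory Defs
  imports Main
begin

datatype fm = PVar nat | Neg fm | Box fm | Imp fm fm

definition Dia :: "fm \<Rightarrow> fm" where "Dia a = Neg (Box (Neg a))"
definition Or :: "fm \<Rightarrow> fm \<Rightarrow> fm" where "Or a b = Imp (Neg a) b"
definition And :: "fm \<Rightarrow> fm \<Rightarrow> fm" where "And a b = Neg (Imp a (Neg b))"

text \<open>Classical propositional axioms (Mendelson's system in signature neg, imp).\<close>
inductive cpl_ax :: "fm \<Rightarrow> bool" where
  A1: "cpl_ax (Imp a (Imp b a))"
| A2: "cpl_ax (Imp (Imp a (Imp b c)) (Imp (Imp a b) (Imp a c)))"
| A3: "cpl_ax (Imp (Imp (Neg b) (Neg a)) (Imp (Imp (Neg b) a) b))"

inductive Km_ax :: "fm \<Rightarrow> bool" where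
  CPL: "cpl_ax a \<Longrightarrow> Km_ax a"
| K': "Km_ax (Imp (Dia a) (Imp (Box (Imp a b)) (Imp (Box a) (Box b))))"
| K1': "Km_ax (Imp (Dia (Neg b)) (Imp (Box (Imp a b)) (Imp (Dia a) (Dia b))))"
| K2': "Km_ax (Imp (Dia a) (Imp (Dia (Imp a b)) (Imp (Box a) (Dia b))))"
| M3': "Km_ax (Imp (Or (Dia a) (Dia (Neg a))) (Imp (Dia b) (Dia (Imp a b))))"
| M4': "Km_ax (Imp (Dia (Neg b)) (Imp (Dia (Neg a)) (Dia (Imp a b))))"
| I1: "Km_ax (Imp (And (Box a) (Box (Neg a))) (And (Box (Imp a b)) (Box (Neg (Imp a b)))))"
| I2: "Km_ax (Imp (And (Box b) (Box (Neg b))) (And (Box (Imp a b)) (Box (Neg (Imp a b)))))"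
| M1: "Km_ax (Imp (Neg (Dia a)) (Box (Imp a b)))"
| M2: "Km_ax (Imp (Box b) (Box (Imp a b)))"
| DN1: "Km_ax (Imp (Box a) (Box (Neg (Neg a))))"
| DN2: "Km_ax (Imp (Box (Neg (Neg a))) (Box a))"

inductive Tm_ax :: "fm \<Rightarrow> bool" where
  CPL: "cpl_ax a \<Longrightarrow> Tm_ax a"
| K: "Tm_ax (Imp (Box (Imp a b)) (Imp (Box a) (Box b)))"
| K1: "Tm_ax (Imp (Box (Imp a b)) (Imp (Dia a) (Dia b)))"
| K2: "Tm_ax (Imp (Dia (Imp a b)) (Imp (Box a) (Dia b)))"
| M1: "Tm_ax (Imp (Neg (Dia a)) (Box (Imp a b)))"
| M2: "Tm_ax (Imp (Box b) (Box (Imp a b)))"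
| M3: "Tm_ax (Imp (Dia b) (Dia (Imp a b)))"
| M4: "Tm_ax (Imp (Dia (Neg a)) (Dia (Imp a b)))"
| DN1: "Tm_ax (Imp (Box a) (Box (Neg (Neg a))))"
| DN2: "Tm_ax (Imp (Box (Neg (Neg a))) (Box a))"
| T: "Tm_ax (Imp (Box a) a)"

inductive derivable :: "(fm \<Rightarrow> bool) \<Rightarrow> fm set \<Rightarrow> fm \<Rightarrow> bool" for Ax where
  prem: "a \<in> G \<Longrightarrow> derivable Ax G a"
| ax: "Ax a \<Longrightarrow> derivable Ax G a"
| mp: "derivable Ax G a \<Longrightarrow> derivable Ax G (Imp a b) \<Longrightarrow> derivable Ax G b"

definition circ :: "fm \<Rightarrow> fm" where "circ d = Imp (Box d) (Dia d)"
definition circ' :: "fm \<Rightarrow> fm" where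
  "circ' g = And (Imp (Box g) g) (Imp (Box (Neg g)) (Neg g))"

end

theory Submission
  imports Defs
begin

lemma d_mono: "derivable Ax G a \<Longrightarrow> G \<subseteq> H \<Longrightarrow> derivable Ax H a"
  by (induction rule: derivable.induct) (auto intro: derivable.intros)

context
  fixes Ax :: "fm \<Rightarrow> bool"
  assumes cpl: "\<And>x. cpl_ax x \<Longrightarrow> Ax x"
begin

lemma dA1: "derivable Ax G (Imp a (Imp b a))"
  by (blast intro: derivable.ax cpl cpl_ax.intros)
lemma dA2: "derivable Ax G (Imp (Imp a (Imp b c)) (Imp (Imp a b) (Imp a c)))"
  by (blast intro: derivable.ax cpl cpl_ax.intros)
lemma dA3: "derivable Ax G (Imp (Imp (Neg b) (Neg a)) (Imp (Imp (Neg b) a) b))"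
  by (blast intro: derivable.ax cpl cpl_ax.intros)

lemma MP: "derivable Ax G (Imp a b) \<Longrightarrow> derivable Ax G a \<Longrightarrow> derivable Ax G b"
  using derivable.mp by blast

lemma did: "derivable Ax G (Imp a a)"
  by (meson MP dA1 dA2)

lemma ded0: "derivable Ax H b \<Longrightarrow> H = insert a G \<Longrightarrow> derivable Ax G (Imp a b)"
proof (induction rule: derivable.induct)
  case (prem x G')
  then show ?case
    by (metis MP dA1 derivable.prem did insert_iff)
next
  case (ax x G')
  then show ?case by (meson MP dA1 derivable.ax)
next
  case (mp G' x y)
  then show ?case by (meson MP dA2)
qed

lemma ded: "derivable Ax (insert a G) b \<Longrightarrow> derivable Ax G (Imp a b)"
  using ded0 by blast

lemma pr: "a \<in> G \<Longrightarrow> derivable Ax G a" by (rule derivable.prem)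

lemma l_negimp: "derivable Ax G (Imp (Neg a) (Imp a b))"
proof -
  let ?H = "insert a (insert (Neg a) G)"
  have "derivable Ax ?H b"
    by (meson MP dA1 dA3 pr insertI1 insertI2)
  then show ?thesis by (meson ded)
qed

lemma l_nn1: "derivable Ax G (Imp (Neg (Neg b)) b)"
proof -
  let ?H = "insert (Neg (Neg b)) G"
  have "derivable Ax ?H b"
    by (meson MP dA1 dA3 did pr insertI1)
  then show ?thesis by (meson ded)
qed

lemma l_nn2: "derivable Ax G (Imp b (Neg (Neg b)))"
proof -
  let ?H = "insert b G"
  have "derivable Ax ?H (Neg (Neg b))"
    by (meson MP dA1 dA3 l_nn1 pr insertI1)
  then show ?thesis by (meson ded)
qed

lemma l_contra1: "derivable Ax G (Imp (Imp (Neg b) (Neg a)) (Imp a b))"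
proof -
  let ?H = "insert a (insert (Imp (Neg b) (Neg a)) G)"
  have "derivable Ax ?H b"
    by (meson MP dA1 dA3 pr insertI1 insertI2)
  then show ?thesis by (meson ded)
qed

lemma l_contra2: "derivable Ax G (Imp (Imp a b) (Imp (Neg b) (Neg a)))"
proof -
  let ?H = "insert (Neg (Neg a)) (insert (Imp a b) G)"
  have "derivable Ax ?H (Neg (Neg b))"
    by (meson MP l_nn1 l_nn2 pr insertI1 insertI2)
  then have "derivable Ax (insert (Imp a b) G) (Imp (Neg (Neg a)) (Neg (Neg b)))" by (rule ded)
  then have "derivable Ax (insert (Imp a b) G) (Imp (Neg b) (Neg a))"
    by (meson MP l_contra1)
  then show ?thesis by (meson ded)
qed

lemma l_impneg: "derivable Ax G (Imp a (Imp (Neg b) (Neg (Imp a b))))"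
proof -
  have "derivable Ax (insert (Imp a b) (insert a G)) b"
    by (meson MP pr insertI1 insertI2)
  then have "derivable Ax (insert a G) (Imp (Imp a b) b)" by (rule ded)
  then have "derivable Ax (insert a G) (Imp (Neg b) (Neg (Imp a b)))"
    by (meson MP l_contra2)
  then show ?thesis by (meson ded)
qed

lemma l_cases: "derivable Ax G (Imp (Imp a b) (Imp (Imp (Neg a) b) b))"
proof -
  let ?H = "insert (Imp (Neg a) b) (insert (Imp a b) G)"
  have 1: "derivable Ax ?H (Imp (Neg b) (Neg a))"
    by (meson MP l_contra2 pr insertI1 insertI2)
  have 2: "derivable Ax ?H (Imp (Neg b) (Neg (Neg a)))"
    by (meson MP l_contra2 pr insertI1 insertI2)
  have "derivable Ax ?H b" using 1 2 by (meson MP dA3)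
  then show ?thesis by (meson ded)
qed

end

fun ev :: "(fm \<Rightarrow> bool) \<Rightarrow> fm \<Rightarrow> bool" where
  "ev v (PVar n) = v (PVar n)"
| "ev v (Box a) = v (Box a)"
| "ev v (Neg a) = (\<not> ev v a)"
| "ev v (Imp a b) = (ev v a \<longrightarrow> ev v b)"

fun atoms :: "fm \<Rightarrow> fm set" where
  "atoms (PVar n) = {PVar n}"
| "atoms (Box a) = {Box a}"
| "atoms (Neg a) = atoms a"
| "atoms (Imp a b) = atoms a \<union> atoms b"

lemma finite_atoms: "finite (atoms a)" by (induction a) auto

definition lit :: "(fm \<Rightarrow> bool) \<Rightarrow> fm \<Rightarrow> fm" where
  "lit v p = (if v p then p else Neg p)"

lemma kalmar:
  assumes cpl: "\<And>x. cpl_ax x \<Longrightarrow> Ax x"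
  shows "atoms phi \<subseteq> S \<Longrightarrow> derivable Ax (lit v ` S) (if ev v phi then phi else Neg phi)"
proof (induction phi)
  case (PVar n)
  then have "lit v (PVar n) \<in> lit v ` S" by auto
  then show ?case by (simp add: lit_def derivable.prem)
next
  case (Box a)
  then have "lit v (Box a) \<in> lit v ` S" by auto
  then show ?case by (simp add: lit_def derivable.prem)
next
  case (Neg a)
  then have ia: "derivable Ax (lit v ` S) (if ev v a then a else Neg a)" by simp
  show ?case
  proof (cases "ev v a")
    case True
    have "derivable Ax (lit v ` S) (Imp a (Neg (Neg a)))" using cpl by (rule l_nn2)
    then have "derivable Ax (lit v ` S) (Neg (Neg a))" using ia True derivable.mp[of Ax "lit v ` S" a] by simp
    then show ?thesis using True by simp
  next
    case False
    then show ?thesis using ia by simp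
  qed
next
  case (Imp a b)
  then have ia: "derivable Ax (lit v ` S) (if ev v a then a else Neg a)"
    and ib: "derivable Ax (lit v ` S) (if ev v b then b else Neg b)" by auto
  show ?case
  proof (cases "ev v b")
    case True
    have "derivable Ax (lit v ` S) (Imp b (Imp a b))" using cpl by (rule dA1)
    then have "derivable Ax (lit v ` S) (Imp a b)" using ib True derivable.mp[of Ax "lit v ` S" b] by simp
    then show ?thesis using True by simp
  next
    case False
    note F = False
    show ?thesis
    proof (cases "ev v a")
      case True
      have "derivable Ax (lit v ` S) (Imp a (Imp (Neg b) (Neg (Imp a b))))" using cpl by (rule l_impneg)
      then have "derivable Ax (lit v ` S) (Imp (Neg b) (Neg (Imp a b)))" using ia True
        derivable.mp[of Ax "lit v ` S" a] by simp
      then have "derivable Ax (lit v ` S) (Neg (Imp a b))" using ib F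
        derivable.mp[of Ax "lit v ` S" "Neg b"] by simp
      then show ?thesis using True F by simp
    next
      case False
      have "derivable Ax (lit v ` S) (Imp (Neg a) (Imp a b))" using cpl by (rule l_negimp)
      then have "derivable Ax (lit v ` S) (Imp a b)" using ia False derivable.mp[of Ax "lit v ` S" "Neg a"] by simp
      then show ?thesis using False by simp
    qed
  qed
qed

lemma elim_step:
  assumes cpl: "\<And>x. cpl_ax x \<Longrightarrow> Ax x"
  shows "finite T \<Longrightarrow> T \<subseteq> S \<Longrightarrow> (\<forall>v. ev v phi) \<Longrightarrow> atoms phi \<subseteq> S \<Longrightarrow>
     \<forall>v. derivable Ax (lit v ` (S - T)) phi"
proof (induction T rule: finite_induct)
  case empty
  then show ?case using kalmar[OF cpl, where phi=phi and S=S] by simp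
next
  case (insert x T)
  show ?case
  proof
    fix v
    let ?S' = "S - insert x T"
    have xS: "x \<in> S" using insert by auto
    have eq: "S - T = insert x ?S'" using xS insert by auto
    have agree: "\<And>w. lit (v(x := w)) ` ?S' = lit v ` ?S'"
      by (auto simp: lit_def image_def)
    have IH: "\<forall>v. derivable Ax (lit v ` (S - T)) phi" using insert.IH insert.prems by blast
    have h1: "derivable Ax (lit (v(x := True)) ` (S - T)) phi" using IH by blast
    have h0: "derivable Ax (lit (v(x := False)) ` (S - T)) phi" using IH by blast
    have h1': "derivable Ax (insert x (lit v ` ?S')) phi"
      using h1 unfolding eq image_insert agree by (simp add: lit_def)
    have h0': "derivable Ax (insert (Neg x) (lit v ` ?S')) phi"
      using h0 unfolding eq image_insert agree by (simp add: lit_def)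
    show "derivable Ax (lit v ` ?S') phi"
    proof -
      have a1: "derivable Ax (lit v ` ?S') (Imp x phi)" using cpl h1' by (rule ded)
      have a0: "derivable Ax (lit v ` ?S') (Imp (Neg x) phi)" using cpl h0' by (rule ded)
      have c: "derivable Ax (lit v ` ?S') (Imp (Imp x phi) (Imp (Imp (Neg x) phi) phi))"
        using cpl by (rule l_cases)
      show ?thesis using derivable.mp[OF a0 derivable.mp[OF a1 c]] .
    qed
  qed
qed

lemma taut:
  assumes cpl: "\<And>x. cpl_ax x \<Longrightarrow> Ax x" and t: "\<forall>v. ev v phi"
  shows "derivable Ax G phi"
proof -
  have "\<forall>v. derivable Ax (lit v ` (atoms phi - atoms phi)) phi"
    by (rule elim_step[OF cpl]) (auto simp: finite_atoms t)
  then have "derivable Ax {} phi" by simp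
  then show ?thesis by (rule d_mono) simp
qed

fun impl :: "fm list \<Rightarrow> fm \<Rightarrow> fm" where
  "impl [] p = p"
| "impl (h # hs) p = Imp h (impl hs p)"

lemma ev_impl: "ev v (impl hs p) = ((\<forall>h\<in>set hs. ev v h) \<longrightarrow> ev v p)"
  by (induction hs) auto

lemma impl_mp: "derivable Ax G (impl hs p) \<Longrightarrow> (\<forall>h\<in>set hs. derivable Ax G h) \<Longrightarrow> derivable Ax G p"
proof (induction hs)
  case Nil then show ?case by simp
next
  case (Cons h hs)
  then have "derivable Ax G (Imp h (impl hs p))" "derivable Ax G h" by auto
  then have "derivable Ax G (impl hs p)" by (rule derivable.mp[rotated])
  then show ?case using Cons by simp
qed

lemma conseq:
  assumes cpl: "\<And>x. cpl_ax x \<Longrightarrow> Ax x"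
    and "\<forall>v. (\<forall>h\<in>set hs. ev v h) \<longrightarrow> ev v p"
    and "\<forall>h\<in>set hs. derivable Ax G h"
  shows "derivable Ax G p"
proof -
  have "\<forall>v. ev v (impl hs p)" using assms(2) by (simp add: ev_impl)
  with cpl have "derivable Ax G (impl hs p)" by (rule taut)
  then show ?thesis using assms(3) by (rule impl_mp)
qed

lemma cplK: "cpl_ax x \<Longrightarrow> Km_ax x" by (rule Km_ax.CPL)
lemma cplT: "cpl_ax x \<Longrightarrow> Tm_ax x" by (rule Tm_ax.CPL)

lemmas sdefs = Dia_def Or_def And_def circ_def circ'_def

lemma conseq1:
  assumes "\<And>x. cpl_ax x \<Longrightarrow> Ax x" "derivable Ax G h1" "\<forall>v. ev v h1 \<longrightarrow> ev v p"
  shows "derivable Ax G p"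
  by (rule conseq[OF assms(1), where hs="[h1]"]) (use assms(2-) in simp_all)
lemma conseq2:
  assumes "\<And>x. cpl_ax x \<Longrightarrow> Ax x" "derivable Ax G h1" "derivable Ax G h2"
    "\<forall>v. ev v h1 \<longrightarrow> ev v h2 \<longrightarrow> ev v p"
  shows "derivable Ax G p"
  by (rule conseq[OF assms(1), where hs="[h1,h2]"]) (use assms(2-) in simp_all)
lemma conseq3:
  assumes "\<And>x. cpl_ax x \<Longrightarrow> Ax x" "derivable Ax G h1" "derivable Ax G h2" "derivable Ax G h3"
    "\<forall>v. ev v h1 \<longrightarrow> ev v h2 \<longrightarrow> ev v h3 \<longrightarrow> ev v p"
  shows "derivable Ax G p"
  by (rule conseq[OF assms(1), where hs="[h1,h2,h3]"]) (use assms(2-) in simp_all)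
lemma conseq4:
  assumes "\<And>x. cpl_ax x \<Longrightarrow> Ax x" "derivable Ax G h1" "derivable Ax G h2" "derivable Ax G h3"
    "derivable Ax G h4"
    "\<forall>v. ev v h1 \<longrightarrow> ev v h2 \<longrightarrow> ev v h3 \<longrightarrow> ev v h4 \<longrightarrow> ev v p"
  shows "derivable Ax G p"
  by (rule conseq[OF assms(1), where hs="[h1,h2,h3,h4]"]) (use assms(2-) in simp_all)

lemma TK:
  "derivable Tm_ax G phi \<Longrightarrow> derivable Km_ax (G \<union> circ ` UNIV \<union> circ' ` UNIV) phi"
proof (induction rule: derivable.induct)
  case (prem a G)
  then show ?case by (auto intro: derivable.prem)
next
  case (ax x G)
  let ?H = "G \<union> circ ` UNIV \<union> circ' ` UNIV"
  have hc: "\<And>d. derivable Km_ax ?H (circ d)" by (auto intro: derivable.prem)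
  have hc': "\<And>d. derivable Km_ax ?H (circ' d)" by (auto intro: derivable.prem)
  have ka: "\<And>y. Km_ax y \<Longrightarrow> derivable Km_ax ?H y" by (rule derivable.ax)
  note C = conseq[OF cplK]
  from ax.hyps show ?case
  proof cases
    case CPL then show ?thesis by (simp add: ka cplK)
  next
    case (K a b) then show ?thesis
      apply simp by (rule conseq2[OF cplK ka[OF Km_ax.K'[of a b]] hc[of a]]) (auto simp: sdefs)
  next
    case (K1 a b) then show ?thesis
      apply simp by (rule conseq3[OF cplK ka[OF Km_ax.K1'[of b a]] ka[OF Km_ax.DN2[of b]] hc[of b]]) (auto simp: sdefs)
  next
    case (K2 a b) then show ?thesis
      apply simp by (rule conseq2[OF cplK ka[OF Km_ax.K2'[of a b]] hc[of a]]) (auto simp: sdefs)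
  next
    case (M1 a b) then show ?thesis using ka Km_ax.M1 by blast
  next
    case (M2 b a) then show ?thesis using ka Km_ax.M2 by blast
  next
    case (M3 b a) then show ?thesis
      apply simp by (rule conseq3[OF cplK ka[OF Km_ax.M3'[of a b]] ka[OF Km_ax.DN2[of a]] hc'[of a]]) (auto simp: sdefs)
  next
    case (M4 a b) then show ?thesis
      apply simp by (rule conseq4[OF cplK ka[OF Km_ax.M4'[of b a]] ka[OF Km_ax.DN2[of b]]
        ka[OF Km_ax.M2[of b a]] hc[of "Imp a b"]]) (auto simp: sdefs)
  next
    case (DN1 a) then show ?thesis using ka Km_ax.DN1 by blast
  next
    case (DN2 a) then show ?thesis using ka Km_ax.DN2 by blast
  next
    case (T a) then show ?thesis
      apply simp by (rule conseq1[OF cplK hc'[of a]]) (auto simp: sdefs)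
  qed
next
  case (mp G a b)
  then show ?case by (metis derivable.mp)
qed

lemma KT:
  "derivable Km_ax H phi \<Longrightarrow> H = G \<union> circ ` U \<union> circ' ` U' \<Longrightarrow> derivable Tm_ax G phi"
proof (induction rule: derivable.induct)
  case (prem a H)
  have ta: "\<And>y. Tm_ax y \<Longrightarrow> derivable Tm_ax G y" by (rule derivable.ax)
  note C = conseq[OF cplT]
  from prem consider "a \<in> G" | d where "a = circ d" | d where "a = circ' d" by auto
  then show ?case
  proof cases
    case 1 then show ?thesis by (rule derivable.prem)
  next
    case 2 show ?thesis unfolding 2
      by (rule conseq2[OF cplT ta[OF Tm_ax.T[of d]] ta[OF Tm_ax.T[of "Neg d"]]]) (auto simp: sdefs)
  next
    case 3 show ?thesis unfolding 3
      by (rule conseq2[OF cplT ta[OF Tm_ax.T[of d]] ta[OF Tm_ax.T[of "Neg d"]]]) (auto simp: sdefs)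
  qed
next
  case (ax x H)
  have ta: "\<And>y. Tm_ax y \<Longrightarrow> derivable Tm_ax G y" by (rule derivable.ax)
  note C = conseq[OF cplT]
  from ax.hyps show ?case
  proof cases
    case CPL then show ?thesis by (simp add: ta cplT)
  next
    case (K' a b) then show ?thesis
      apply simp by (rule conseq1[OF cplT ta[OF Tm_ax.K[of a b]]]) (auto simp: sdefs)
  next
    case (K1' b a) then show ?thesis
      apply simp by (rule conseq1[OF cplT ta[OF Tm_ax.K1[of a b]]]) (auto simp: sdefs)
  next
    case (K2' a b) then show ?thesis
      apply simp by (rule conseq1[OF cplT ta[OF Tm_ax.K2[of a b]]]) (auto simp: sdefs)
  next
    case (M3' a b) then show ?thesis
      apply simp by (rule conseq1[OF cplT ta[OF Tm_ax.M3[of b a]]]) (auto simp: sdefs)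
  next
    case (M4' b a) then show ?thesis
      apply simp by (rule conseq1[OF cplT ta[OF Tm_ax.M4[of a b]]]) (auto simp: sdefs)
  next
    case (I1 a b) then show ?thesis
      apply simp by (rule conseq2[OF cplT ta[OF Tm_ax.T[of a]] ta[OF Tm_ax.T[of "Neg a"]]]) (auto simp: sdefs)
  next
    case (I2 b a) then show ?thesis
      apply simp by (rule conseq2[OF cplT ta[OF Tm_ax.T[of b]] ta[OF Tm_ax.T[of "Neg b"]]]) (auto simp: sdefs)
  next
    case (M1 a b) then show ?thesis using ta Tm_ax.M1 by blast
  next
    case (M2 b a) then show ?thesis using ta Tm_ax.M2 by blast
  next
    case (DN1 a) then show ?thesis using ta Tm_ax.DN1 by blast
  next
    case (DN2 a) then show ?thesis using ta Tm_ax.DN2 by blast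
  qed
next
  case (mp H a b)
  then show ?case by (metis derivable.mp)
qed

theorem mainTheorem9:
  fixes G :: "fm set" and phi :: fm
  assumes "finite G"
  shows "derivable Tm_ax G phi \<longleftrightarrow>
    (\<exists>U U' :: fm set. derivable Km_ax (G \<union> circ ` U \<union> circ' ` U') phi)"
  using TK KT by blast

end
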